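(* Let $\delta\ge0$ and define $f^\star_\delta(x,a)=I(\eta_a(x)>T^\star_{\delta,a})+\tau^\star_{\delta,a}I(\eta_a(x)=T^\star_{\delta,a})$ with $$\tau^\star_{\delta,1}=\rho\Big(\frac{\pi^\star_{0,+}-\pi^\star_{1,+}+\widetilde\delta}{\pi^\star_{1,=}}\Big),\qquad \tau^\star_{\delta,0}=\rho\Big(\frac{\pi^\star_{1,+}-\pi^\star_{0,+}-\widetilde\delta}{\pi^\star_{0,=}}\Big).$$ Then: if $D_-(0)>\delta$, $\mathrm{DDP}(f^\star_\delta)=\delta$; if $D_-(0)\le 0$, $\mathrm{DDP}(f^\star_\delta)=0$; and if $0<D_-(0)\le\delta$, $\mathrm{DDP}(f^\star_\delta)=D_-(0)$.
   Context: Let $(X,A,Y)$ be a random vector on $\mathbb{R}^d\times\{0,1\}\times\{0,1\}$ with law $P$; let $p_a=P(A=a)$ with $p_0,p_1>0$; let $P_{X|A=a}$ be the conditional law of $X$ given $A=a$; let $\eta_a(x)=P(Y=1\mid A=a,X=x)$. For a classifier $f:\mathbb{R}^d\times\{0,1\}\to[0,1]$, $\mathrm{DDP}(f)=\int f(x,1)\,dP_{X|A=1}(x)-\int f(x,0)\,dP_{X|A=0}(x)$. For $t\in\mathbb{R}$ define $D_-(t)=P_{X|A=1}\big(\eta_1(X)>\tfrac12+\tfrac{t}{2p_1}\big)-P_{X|A=0}\big(\eta_0(X)\ge\tfrac12-\tfrac{t}{2p_0}\big)$ and $D_+(t)=P_{X|A=1}\big(\eta_1(X)\ge\tfrac12+\tfrac{t}{2p_1}\big)-P_{X|A=0}\big(\eta_0(X)>\tfrac12-\tfrac{t}{2p_0}\big)$.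 For $\delta\ge 0$ let $t^\star_\delta=\inf\{t\in\mathbb{R}:D_-(t)<\delta\}$ if $D_-(0)>\delta$ and $t^\star_\delta=0$ otherwise; $T^\star_{\delta,1}=\tfrac12+\tfrac{t^\star_\delta}{2p_1}$, $T^\star_{\delta,0}=\tfrac12-\tfrac{t^\star_\delta}{2p_0}$. Standing assumption: $D_+(0)\ge -D_-(0)$. Let $\pi^\star_{a,+}=P_{X|A=a}(\eta_a(X)>T^\star_{\delta,a})$, $\pi^\star_{a,=}=P_{X|A=a}(\eta_a(X)=T^\star_{\delta,a})$, $\widetilde\delta=\delta\cdot I(D_-(0)>\delta)$, and $\rho:\mathbb{R}\to[0,1]$, $\rho(x)=0$ for $x\le0$, $\rho(x)=1$ for $x\ge1$, $\rho(x)=x$ otherwise. Convention: $x/0=0$ for all $x\in\mathbb{R}$. *)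

theory Defs
  imports "HOL-Probability.Probability"
begin

(* Group label a \<in> {0,1} is encoded as bool: True = 1, False = 0.
   p a = P(A = a);  M a = P_{X|A=a};  eta a x = P(Y=1 | A=a, X=x). *)

definition Dminus :: "(bool \<Rightarrow> real) \<Rightarrow> (bool \<Rightarrow> 'x measure) \<Rightarrow> (bool \<Rightarrow> 'x \<Rightarrow> real) \<Rightarrow> real \<Rightarrow> real" where
  "Dminus p M eta t =
     measure (M True) {x \<in> space (M True). eta True x > 1/2 + t / (2 * p True)}
   - measure (M False) {x \<in> space (M False). eta False x \<ge> 1/2 - t / (2 * p False)}"

definition Dplus :: "(bool \<Rightarrow> real) \<Rightarrow> (bool \<Rightarrow> 'x measure) \<Rightarrow> (bool \<Rightarrow> 'x \<Rightarrow> real) \<Rightarrow> real \<Rightarrow> real" where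
  "Dplus p M eta t =
     measure (M True) {x \<in> space (M True). eta True x \<ge> 1/2 + t / (2 * p True)}
   - measure (M False) {x \<in> space (M False). eta False x > 1/2 - t / (2 * p False)}"

definition tstar :: "(bool \<Rightarrow> real) \<Rightarrow> (bool \<Rightarrow> 'x measure) \<Rightarrow> (bool \<Rightarrow> 'x \<Rightarrow> real) \<Rightarrow> real \<Rightarrow> real" where
  "tstar p M eta \<delta> =
     (if Dminus p M eta 0 > \<delta> then Inf {t. Dminus p M eta t < \<delta>} else 0)"

definition Tstar :: "(bool \<Rightarrow> real) \<Rightarrow> (bool \<Rightarrow> 'x measure) \<Rightarrow> (bool \<Rightarrow> 'x \<Rightarrow> real) \<Rightarrow> real \<Rightarrow> bool \<Rightarrow> real" where
  "Tstar p M eta \<delta> a =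
     (if a then 1/2 + tstar p M eta \<delta> / (2 * p True)
           else 1/2 - tstar p M eta \<delta> / (2 * p False))"

definition pi_plus :: "(bool \<Rightarrow> real) \<Rightarrow> (bool \<Rightarrow> 'x measure) \<Rightarrow> (bool \<Rightarrow> 'x \<Rightarrow> real) \<Rightarrow> real \<Rightarrow> bool \<Rightarrow> real" where
  "pi_plus p M eta \<delta> a = measure (M a) {x \<in> space (M a). eta a x > Tstar p M eta \<delta> a}"

definition pi_eq :: "(bool \<Rightarrow> real) \<Rightarrow> (bool \<Rightarrow> 'x measure) \<Rightarrow> (bool \<Rightarrow> 'x \<Rightarrow> real) \<Rightarrow> real \<Rightarrow> bool \<Rightarrow> real" where
  "pi_eq p M eta \<delta> a = measure (M a) {x \<in> space (M a). eta a x = Tstar p M eta \<delta> a}"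

definition delta_tilde :: "(bool \<Rightarrow> real) \<Rightarrow> (bool \<Rightarrow> 'x measure) \<Rightarrow> (bool \<Rightarrow> 'x \<Rightarrow> real) \<Rightarrow> real \<Rightarrow> real" where
  "delta_tilde p M eta \<delta> = (if Dminus p M eta 0 > \<delta> then \<delta> else 0)"

definition rho :: "real \<Rightarrow> real" where
  "rho x = (if x \<le> 0 then 0 else if x \<ge> 1 then 1 else x)"

(* note: x / 0 = 0 in Isabelle, matching the paper's convention *)
definition tau_star :: "(bool \<Rightarrow> real) \<Rightarrow> (bool \<Rightarrow> 'x measure) \<Rightarrow> (bool \<Rightarrow> 'x \<Rightarrow> real) \<Rightarrow> real \<Rightarrow> bool \<Rightarrow> real" where
  "tau_star p M eta \<delta> a =
     (if a then rho ((pi_plus p M eta \<delta> False - pi_plus p M eta \<delta> True + delta_tilde p M eta \<delta>)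
                     / pi_eq p M eta \<delta> True)
           else rho ((pi_plus p M eta \<delta> True - pi_plus p M eta \<delta> False - delta_tilde p M eta \<delta>)
                     / pi_eq p M eta \<delta> False))"

definition f_star :: "(bool \<Rightarrow> real) \<Rightarrow> (bool \<Rightarrow> 'x measure) \<Rightarrow> (bool \<Rightarrow> 'x \<Rightarrow> real) \<Rightarrow> real \<Rightarrow> 'x \<Rightarrow> bool \<Rightarrow> real" where
  "f_star p M eta \<delta> x a =
     (if eta a x > Tstar p M eta \<delta> a then 1 else 0)
     + tau_star p M eta \<delta> a * (if eta a x = Tstar p M eta \<delta> a then 1 else 0)"

definition DDP :: "(bool \<Rightarrow> 'x measure) \<Rightarrow> ('x \<Rightarrow> bool \<Rightarrow> real) \<Rightarrow> real" where
  "DDP M f = (\<integral>x. f x True \<partial>M True) - (\<integral>x. f x False \<partial>M False)"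

end

theory Submission
  imports Defs
begin

lemma arch_k: assumes "(k::real) > 0" "d > 0" shows "\<exists>n. k / real (Suc n) < d"
proof -
  obtain n where n: "k / d < real n" using reals_Archimedean2 by blast
  have "k < d * real (Suc n)" using n assms by (simp add: field_simps)
  then show ?thesis using assms by (auto simp: field_simps intro!: exI[of _ n])
qed

lemma kmono: assumes "(k::real) > 0" "n \<le> m" shows "k / (1 + real m) \<le> k / (1 + real n)"
  using assms by (intro divide_left_mono) auto

context finite_measure begin

lemma lim_A: assumes g[measurable]: "g \<in> borel_measurable M" and k: "k > 0"
  shows "(\<lambda>n. measure M {x\<in>space M. g x > c + k / real (Suc n)}) \<longlonglongrightarrow> measure M {x\<in>space M. g x > c}"
proof -
  have "(\<lambda>n. measure M {x\<in>space M. g x > c + k / real (Suc n)}) \<longlonglongrightarrow> measure M (\<Union>n. {x\<in>space M. g x > c + k / real (Suc n)})"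
    apply (rule finite_Lim_measure_incseq) apply auto[1]
    apply (auto simp: incseq_def) by (smt (verit) kmono[OF k])
  moreover have "(\<Union>n. {x\<in>space M. g x > c + k / real (Suc n)}) = {x\<in>space M. g x > c}"
  proof safe
    fix x n assume "c + k / real (Suc n) < g x" thus "c < g x" using k by (smt (verit) divide_pos_pos of_nat_0_less_iff zero_less_Suc)
  next
    fix x assume "x \<in> space M" "c < g x"
    then obtain n where "k / real (Suc n) < g x - c" using arch_k[OF k, of "g x - c"] by auto
    thus "x \<in> (\<Union>n. {x\<in>space M. g x > c + k / real (Suc n)})" using \<open>x \<in> space M\<close> by (auto intro!: exI[of _ n])
  qed
  ultimately show ?thesis by simp
qed

lemma lim_B: assumes g[measurable]: "g \<in> borel_measurable M" and k: "k > 0"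
  shows "(\<lambda>n. measure M {x\<in>space M. g x \<ge> c - k / real (Suc n)}) \<longlonglongrightarrow> measure M {x\<in>space M. g x \<ge> c}"
proof -
  have "(\<lambda>n. measure M {x\<in>space M. g x \<ge> c - k / real (Suc n)}) \<longlonglongrightarrow> measure M (\<Inter>n. {x\<in>space M. g x \<ge> c - k / real (Suc n)})"
    apply (rule finite_Lim_measure_decseq) apply auto[1]
    apply (auto simp: decseq_def) by (smt (verit) kmono[OF k])
  moreover have "(\<Inter>n. {x\<in>space M. g x \<ge> c - k / real (Suc n)}) = {x\<in>space M. g x \<ge> c}"
  proof -
    have eq: "(\<forall>n. c - k / real (Suc n) \<le> y) \<longleftrightarrow> c \<le> y" for y
    proof
      assume h: "\<forall>n. c - k / real (Suc n) \<le> y"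
      show "c \<le> y"
      proof (rule ccontr)
        assume "\<not> c \<le> y"
        then obtain n where "k / real (Suc n) < c - y" using arch_k[OF k, of "c - y"] by auto
        with h show False by (smt (verit))
      qed
    next
      assume "c \<le> y" thus "\<forall>n. c - k / real (Suc n) \<le> y" using k by (smt (verit) divide_pos_pos of_nat_0_less_iff zero_less_Suc)
    qed
    show ?thesis using eq by blast
  qed
  ultimately show ?thesis by simp
qed

lemma lim_C: assumes g[measurable]: "g \<in> borel_measurable M" and k: "k > 0"
  shows "(\<lambda>n. measure M {x\<in>space M. g x > c - k / real (Suc n)}) \<longlonglongrightarrow> measure M {x\<in>space M. g x \<ge> c}"
proof -
  have "(\<lambda>n. measure M {x\<in>space M. g x > c - k / real (Suc n)}) \<longlonglongrightarrow> measure M (\<Inter>n. {x\<in>space M. g x > c - k / real (Suc n)})"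
    apply (rule finite_Lim_measure_decseq) apply auto[1]
    apply (auto simp: decseq_def) by (smt (verit) kmono[OF k])
  moreover have "(\<Inter>n. {x\<in>space M. g x > c - k / real (Suc n)}) = {x\<in>space M. g x \<ge> c}"
  proof -
    have eq: "(\<forall>n. c - k / real (Suc n) < y) \<longleftrightarrow> c \<le> y" for y
    proof
      assume h: "\<forall>n. c - k / real (Suc n) < y"
      show "c \<le> y"
      proof (rule ccontr)
        assume "\<not> c \<le> y"
        then obtain n where "k / real (Suc n) < c - y" using arch_k[OF k, of "c - y"] by auto
        with h show False by (smt (verit))
      qed
    next
      assume "c \<le> y" thus "\<forall>n. c - k / real (Suc n) < y" using k by (smt (verit) divide_pos_pos of_nat_0_less_iff zero_less_Suc)
    qed
    show ?thesis using eq by blast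
  qed
  ultimately show ?thesis by simp
qed

lemma lim_D: assumes g[measurable]: "g \<in> borel_measurable M" and k: "k > 0"
  shows "(\<lambda>n. measure M {x\<in>space M. g x \<ge> c + k / real (Suc n)}) \<longlonglongrightarrow> measure M {x\<in>space M. g x > c}"
proof -
  have "(\<lambda>n. measure M {x\<in>space M. g x \<ge> c + k / real (Suc n)}) \<longlonglongrightarrow> measure M (\<Union>n. {x\<in>space M. g x \<ge> c + k / real (Suc n)})"
    apply (rule finite_Lim_measure_incseq) apply auto[1]
    apply (auto simp: incseq_def) by (smt (verit) kmono[OF k])
  moreover have "(\<Union>n. {x\<in>space M. g x \<ge> c + k / real (Suc n)}) = {x\<in>space M. g x > c}"
  proof safe
    fix x n assume "c + k / real (Suc n) \<le> g x" thus "c < g x" using k by (smt (verit) divide_pos_pos of_nat_0_less_iff zero_less_Suc)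
  next
    fix x assume "x \<in> space M" "c < g x"
    then obtain n where "k / real (Suc n) < g x - c" using arch_k[OF k, of "g x - c"] by auto
    thus "x \<in> (\<Union>n. {x\<in>space M. g x \<ge> c + k / real (Suc n)})" using \<open>x \<in> space M\<close> by (auto intro!: exI[of _ n])
  qed
  ultimately show ?thesis by simp
qed

end

lemma rho_mult: assumes "(q::real) \<ge> 0" shows "rho (z / q) * q = max 0 (min z q)"
proof (cases "q = 0")
  case True thus ?thesis by simp
next
  case False
  hence q: "q > 0" using assms by simp
  show ?thesis
  proof (cases "z \<le> 0")
    case True
    hence "z / q \<le> 0" using q by (simp add: divide_nonpos_pos)
    thus ?thesis using True by (simp add: rho_def)
  next
    case nz: False
    show ?thesis
    proof (cases "z \<ge> q")
      case True
      hence "z / q \<ge> 1" "\<not> z / q \<le> 0" using q nz by (simp_all add: divide_le_0_iff)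
      thus ?thesis using True nz q by (simp add: rho_def)
    next
      case False
      hence "\<not> z / q \<le> 0" "\<not> z / q \<ge> 1" using q nz by (simp_all add: field_simps)
      thus ?thesis using False nz q by (simp add: rho_def)
    qed
  qed
qed

lemma integral_fstar:
  fixes p :: "bool \<Rightarrow> real"
    and M :: "bool \<Rightarrow> ('x::euclidean_space) measure"
    and eta :: "bool \<Rightarrow> 'x \<Rightarrow> real"
  assumes prob: "prob_space (M a)"
    and em[measurable]: "eta a \<in> borel_measurable (M a)"
  shows "(\<integral>x. f_star p M eta \<delta> x a \<partial>M a) = pi_plus p M eta \<delta> a + tau_star p M eta \<delta> a * pi_eq p M eta \<delta> a"
proof -
  interpret P: prob_space "M a" by fact
  define T where "T = Tstar p M eta \<delta> a"
  define A where "A = {x\<in>space (M a). eta a x > T}"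
  define B where "B = {x\<in>space (M a). eta a x = T}"
  have A[measurable]: "A \<in> sets (M a)" unfolding A_def by measurable
  have B[measurable]: "B \<in> sets (M a)" unfolding B_def by measurable
  have "(\<integral>x. f_star p M eta \<delta> x a \<partial>M a) = (\<integral>x. indicator A x + tau_star p M eta \<delta> a * indicator B x \<partial>M a)"
    by (rule Bochner_Integration.integral_cong) (auto simp: f_star_def A_def B_def T_def indicator_def)
  also have "\<dots> = (\<integral>x. indicator A x \<partial>M a) + (\<integral>x. tau_star p M eta \<delta> a * indicator B x \<partial>M a)"
    by (rule Bochner_Integration.integral_add)
       (auto intro!: integrable_real_indicator simp: A B P.emeasure_finite less_top[symmetric])
  also have "\<dots> = measure (M a) A + tau_star p M eta \<delta> a * measure (M a) B"
    using A B by (simp add: Int_absorb2 sets.sets_into_space)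
  finally show ?thesis unfolding pi_plus_def pi_eq_def A_def B_def T_def .
qed

theorem proposition5p1:
  fixes p :: "bool \<Rightarrow> real"
    and M :: "bool \<Rightarrow> ('x::euclidean_space) measure"
    and eta :: "bool \<Rightarrow> 'x \<Rightarrow> real"
    and \<delta> :: real
  assumes prob: "\<And>a. prob_space (M a)"
    and sets_M: "\<And>a. sets (M a) = sets borel"
    and eta_meas: "\<And>a. eta a \<in> borel_measurable borel"
    and eta_range: "\<And>a x. 0 \<le> eta a x \<and> eta a x \<le> 1"
    and p_pos: "\<And>a. p a > 0"
    and p_sum: "p True + p False = 1"
    and standing: "Dplus p M eta 0 \<ge> - Dminus p M eta 0"
    and delta_nonneg: "\<delta> \<ge> 0"
  shows "(Dminus p M eta 0 > \<delta> \<longrightarrow> DDP M (f_star p M eta \<delta>) = \<delta>)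
       \<and> (Dminus p M eta 0 \<le> 0 \<longrightarrow> DDP M (f_star p M eta \<delta>) = 0)
       \<and> (0 < Dminus p M eta 0 \<and> Dminus p M eta 0 \<le> \<delta> \<longrightarrow> DDP M (f_star p M eta \<delta>) = Dminus p M eta 0)"
proof -
  interpret M1: prob_space "M True" by (rule prob)
  interpret M0: prob_space "M False" by (rule prob)
  have em[measurable]: "eta a \<in> borel_measurable (M a)" for a
    by (subst measurable_cong_sets[OF sets_M refl]) (rule eta_meas)
  have em1[measurable]: "eta True \<in> borel_measurable (M True)" and em0[measurable]: "eta False \<in> borel_measurable (M False)" by (rule em)+
  have sp: "space (M a) = UNIV" for a using sets_eq_imp_space_eq[OF sets_M[of a]] by simp
  define D where "D = Dminus p M eta"
  define pp where "pp = pi_plus p M eta \<delta>"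
  define pe where "pe = pi_eq p M eta \<delta>"
  have DDP: "DDP M (f_star p M eta \<delta>) = pp True + tau_star p M eta \<delta> True * pe True - (pp False + tau_star p M eta \<delta> False * pe False)"
    unfolding DDP_def pp_def pe_def using integral_fstar[where M=M and eta=eta and p=p and \<delta>=\<delta> and a=True, OF prob em] integral_fstar[where M=M and eta=eta and p=p and \<delta>=\<delta> and a=False, OF prob em] by simp
  have pe_nn: "pe a \<ge> 0" for a unfolding pe_def pi_eq_def by simp
  have split: "measure (M a) {x\<in>space (M a). eta a x \<ge> c} = measure (M a) {x\<in>space (M a). eta a x > c} + measure (M a) {x\<in>space (M a). eta a x = c}" for a c
  proof -
    interpret P: prob_space "M a" by (rule prob)
    have "{x\<in>space (M a). eta a x \<ge> c} = {x\<in>space (M a). eta a x > c} \<union> {x\<in>space (M a). eta a x = c}" by auto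
    moreover have "measure (M a) ({x\<in>space (M a). eta a x > c} \<union> {x\<in>space (M a). eta a x = c}) = measure (M a) {x\<in>space (M a). eta a x > c} + measure (M a) {x\<in>space (M a). eta a x = c}"
      by (rule P.finite_measure_Union) auto
    ultimately show ?thesis by simp
  qed
  have mono1: "measure (M a) {x\<in>space (M a). eta a x > c'} \<le> measure (M a) {x\<in>space (M a). eta a x > c}" if "c \<le> c'" for a c c'
  proof -
    interpret P: prob_space "M a" by (rule prob)
    show ?thesis by (rule P.finite_measure_mono) (use that in auto)
  qed
  have mono2: "measure (M a) {x\<in>space (M a). eta a x \<ge> c'} \<le> measure (M a) {x\<in>space (M a). eta a x \<ge> c}" if "c \<le> c'" for a c c'
  proof -
    interpret P: prob_space "M a" by (rule prob)
    show ?thesis by (rule P.finite_measure_mono) (use that in auto)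
  qed
  have Dmono: "D t' \<le> D t" if "t \<le> t'" for t t'
  proof -
    have u1: "1/2 + t / (2 * p True) \<le> 1/2 + t' / (2 * p True)" using that p_pos[of True] by (simp add: divide_right_mono)
    have u0: "1/2 - t' / (2 * p False) \<le> 1/2 - t / (2 * p False)" using that p_pos[of False] by (simp add: divide_right_mono)
    have "measure (M True) {x\<in>space (M True). eta True x > 1/2 + t' / (2 * p True)} \<le> measure (M True) {x\<in>space (M True). eta True x > 1/2 + t / (2 * p True)}"
      "measure (M False) {x\<in>space (M False). eta False x \<ge> 1/2 - t / (2 * p False)} \<le> measure (M False) {x\<in>space (M False). eta False x \<ge> 1/2 - t' / (2 * p False)}"
      by (rule mono1[OF u1], rule mono2[OF u0])
    thus ?thesis unfolding D_def Dminus_def by linarith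
  qed
  have rm: "rho (z / q) * q = max 0 (min z q)" if "q \<ge> 0" for z q using rho_mult[OF that] .
  have c1: "D 0 > \<delta> \<longrightarrow> DDP M (f_star p M eta \<delta>) = \<delta>"
  proof
    assume h: "D 0 > \<delta>"
    define S where "S = {t. D t < \<delta>}"
    define ts where "ts = Inf S"
    have tsd: "tstar p M eta \<delta> = ts" unfolding tstar_def ts_def S_def using h D_def by simp
    have p1: "p True < 1" "p False < 1" using p_pos[of True] p_pos[of False] p_sum by auto
    have "1 \<in> S"
    proof -
      have g1: "1 < 1/2 + 1 / (2 * p True)" using p1 p_pos[of True] by (simp add: field_simps)
      have g0: "1/2 - 1 / (2 * p False) < 0" using p1 p_pos[of False] by (simp add: field_simps)
      have e1: "{x\<in>space (M True). eta True x > 1/2 + 1 / (2 * p True)} = {}" proof -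
        have "eta True x \<le> 1" for x using eta_range by blast
        thus ?thesis using g1 by (smt (verit) Collect_empty_eq)
      qed
      have e2: "{x\<in>space (M False). eta False x \<ge> 1/2 - 1 / (2 * p False)} = space (M False)" proof -
        have "eta False x \<ge> 0" for x using eta_range by blast
        hence "1/2 - 1 / (2 * p False) \<le> eta False x" for x using g0 by (smt (verit))
        thus ?thesis by auto
      qed
      have "D 1 = -1" unfolding D_def Dminus_def e1 e2 by (simp add: M0.prob_space)
      thus ?thesis unfolding S_def using delta_nonneg by simp
    qed
    hence Sne: "S \<noteq> {}" by auto
    have bdd: "bdd_below S"
    proof
      fix t assume "t \<in> S"
      hence "D t < \<delta>" by (simp add: S_def)
      show "0 \<le> t"
      proof (rule ccontr)
        assume "\<not> 0 \<le> t"
        hence "D 0 \<le> D t" using Dmono[of t 0] by simp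
        thus False using h \<open>D t < \<delta>\<close> by linarith
      qed
    qed
    define T1 where "T1 = 1/2 + ts / (2 * p True)"
    define T0 where "T0 = 1/2 - ts / (2 * p False)"
    have k1: "1 / (2 * p True) > 0" and k0: "1 / (2 * p False) > 0" using p_pos by auto
    have right: "D (ts + 1 / real (Suc n)) < \<delta>" for n
    proof -
      have "ts < ts + 1 / real (Suc n)" by simp
      then obtain s where "s \<in> S" "s < ts + 1 / real (Suc n)" using cInf_lessD[OF Sne] unfolding ts_def by blast
      hence "D s < \<delta>" "D (ts + 1 / real (Suc n)) \<le> D s" using Dmono[of s "ts + 1 / real (Suc n)"] unfolding S_def by auto
      thus ?thesis by linarith
    qed
    have left: "D (ts - 1 / real (Suc n)) \<ge> \<delta>" for n
    proof (rule ccontr)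
      assume "\<not> ?thesis"
      hence "ts - 1 / real (Suc n) \<in> S" by (simp add: S_def)
      hence "ts \<le> ts - 1 / real (Suc n)" unfolding ts_def by (rule cInf_lower[OF _ bdd])
      thus False by simp
    qed
    have eqR: "D (ts + 1 / real (Suc n)) = measure (M True) {x\<in>space (M True). eta True x > T1 + (1 / (2 * p True)) / real (Suc n)}
       - measure (M False) {x\<in>space (M False). eta False x \<ge> T0 - (1 / (2 * p False)) / real (Suc n)}" for n
    proof -
      have a: "1/2 + (ts + 1 / real (Suc n)) / (2 * p True) = T1 + (1 / (2 * p True)) / real (Suc n)"
        unfolding T1_def by (simp add: add_divide_distrib)
      have b: "1/2 - (ts + 1 / real (Suc n)) / (2 * p False) = T0 - (1 / (2 * p False)) / real (Suc n)"
        unfolding T0_def by (simp add: add_divide_distrib)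
      show ?thesis unfolding D_def Dminus_def a b ..
    qed
    have eqL: "D (ts - 1 / real (Suc n)) = measure (M True) {x\<in>space (M True). eta True x > T1 - (1 / (2 * p True)) / real (Suc n)}
       - measure (M False) {x\<in>space (M False). eta False x \<ge> T0 + (1 / (2 * p False)) / real (Suc n)}" for n
    proof -
      have a: "1/2 + (ts - 1 / real (Suc n)) / (2 * p True) = T1 - (1 / (2 * p True)) / real (Suc n)"
        unfolding T1_def by (simp add: diff_divide_distrib)
      have b: "1/2 - (ts - 1 / real (Suc n)) / (2 * p False) = T0 + (1 / (2 * p False)) / real (Suc n)"
        unfolding T0_def by (simp add: diff_divide_distrib)
      show ?thesis unfolding D_def Dminus_def a b ..
    qed
    have limR: "(\<lambda>n. D (ts + 1 / real (Suc n))) \<longlonglongrightarrow> measure (M True) {x\<in>space (M True). eta True x > T1} - measure (M False) {x\<in>space (M False). eta False x \<ge> T0}"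
      unfolding eqR by (intro tendsto_diff M1.lim_A M0.lim_B em1 em0 k1 k0)
    have limL: "(\<lambda>n. D (ts - 1 / real (Suc n))) \<longlonglongrightarrow> measure (M True) {x\<in>space (M True). eta True x \<ge> T1} - measure (M False) {x\<in>space (M False). eta False x > T0}"
      unfolding eqL by (intro tendsto_diff M1.lim_C M0.lim_D em1 em0 k1 k0)
    have ineq1: "measure (M True) {x\<in>space (M True). eta True x > T1} - measure (M False) {x\<in>space (M False). eta False x \<ge> T0} \<le> \<delta>"
      by (rule LIMSEQ_le_const2[OF limR]) (use right less_imp_le in blast)
    have ineq2: "measure (M True) {x\<in>space (M True). eta True x \<ge> T1} - measure (M False) {x\<in>space (M False). eta False x > T0} \<ge> \<delta>"
      by (rule LIMSEQ_le_const[OF limL]) (use left in blast)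
    have TT: "Tstar p M eta \<delta> True = T1" "Tstar p M eta \<delta> False = T0" unfolding Tstar_def tsd T1_def T0_def by simp_all
    have ppT: "pp True = measure (M True) {x\<in>space (M True). eta True x > T1}" "pp False = measure (M False) {x\<in>space (M False). eta False x > T0}"
      unfolding pp_def pi_plus_def TT by simp_all
    have peT: "pe True = measure (M True) {x\<in>space (M True). eta True x = T1}" "pe False = measure (M False) {x\<in>space (M False). eta False x = T0}"
      unfolding pe_def pi_eq_def TT by simp_all
    have i1: "pp True - pp False - pe False \<le> \<delta>" using ineq1 split[of False T0] ppT peT by simp
    have i2: "pp True + pe True - pp False \<ge> \<delta>" using ineq2 split[of True T1] ppT peT by simp
    have dt: "delta_tilde p M eta \<delta> = \<delta>" unfolding delta_tilde_def using h D_def by simp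
    have "DDP M (f_star p M eta \<delta>) = pp True + max 0 (min (pp False - pp True + \<delta>) (pe True)) - (pp False + max 0 (min (pp True - pp False - \<delta>) (pe False)))"
      unfolding DDP tau_star_def dt pp_def[symmetric] pe_def[symmetric] using rm[OF pe_nn] by (simp add: mult.commute)
    also have "\<dots> = \<delta>" using i1 i2 pe_nn[of True] pe_nn[of False] by (auto simp: max_def min_def)
    finally show "DDP M (f_star p M eta \<delta>) = \<delta>" .
  qed
  have c23: "D 0 \<le> \<delta> \<Longrightarrow> DDP M (f_star p M eta \<delta>) = max (D 0) 0"
  proof -
    assume h: "D 0 \<le> \<delta>"
    have tsd: "tstar p M eta \<delta> = 0" unfolding tstar_def using h D_def by simp
    have TT: "Tstar p M eta \<delta> a = 1/2" for a unfolding Tstar_def tsd by simp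
    have dt: "delta_tilde p M eta \<delta> = 0" unfolding delta_tilde_def using h D_def by simp
    have ppT: "pp a = measure (M a) {x\<in>space (M a). eta a x > 1/2}" for a unfolding pp_def pi_plus_def TT ..
    have peT: "pe a = measure (M a) {x\<in>space (M a). eta a x = 1/2}" for a unfolding pe_def pi_eq_def TT ..
    have D0: "D 0 = pp True - pp False - pe False" unfolding D_def Dminus_def using split[of False "1/2"] ppT peT by simp
    have Dp: "Dplus p M eta 0 = pp True + pe True - pp False" unfolding Dplus_def using split[of True "1/2"] ppT peT by simp
    have st: "pp True + pe True - pp False \<ge> - (pp True - pp False - pe False)" using standing D0 Dp D_def by simp
    have "DDP M (f_star p M eta \<delta>) = pp True + max 0 (min (pp False - pp True) (pe True)) - (pp False + max 0 (min (pp True - pp False) (pe False)))"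
      unfolding DDP tau_star_def dt pp_def[symmetric] pe_def[symmetric] using rm[OF pe_nn] by (simp add: mult.commute)
    also have "\<dots> = max (D 0) 0" unfolding D0 using st pe_nn[of True] pe_nn[of False] by (auto simp: max_def min_def)
    finally show ?thesis .
  qed
  show ?thesis unfolding D_def[symmetric] using c1 c23 delta_nonneg by auto
qed

end
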